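(* Let $\mathcal{B}\in\mathbb{Z}^{n\times 2}$ have rank $2$ with rows $b_1,\dots,b_n$ summing to zero, and let $I_{\mathcal{B}}$ and $I$ be its lattice ideal and lattice basis ideal. Define $\alpha\in\mathbb{N}^n$ by $\alpha_i=\max_j\nu_{ij}$ if $b_{i1}>0$ and $\alpha_i=0$ otherwise. Then $\partial^{\alpha}I_{\mathcal{B}}\subseteq I$.
   Context: Work in the polynomial ring $\mathbb{C}[\partial_1,\dots,\partial_n]$. $\mathcal{B}=(b_{ji})$ with columns $b^{(1)},b^{(2)}$ and $L_{\mathcal{B}}=\mathcal{B}\mathbb{Z}^2$. For $u\in\mathbb{Z}^n$, $u=u_+-u_-$ with $u_\pm\in\mathbb{N}^n$ of disjoint supports. Lattice ideal: $I_{\mathcal{B}}=\langle\partial^{u_+}-\partial^{u_-}:u\in L_{\mathcal{B}}\rangle$. Lattice basis ideal: $I=\langle\partial^{b^{(1)}_+}-\partial^{b^{(1)}_-},\partial^{b^{(2)}_+}-\partial^{b^{(2)}_-}\rangle$. Index: $\nu_{ij}=\min(|b_{i1}b_{j2}|,|b_{j1}b_{i2}|)$ if $b_i,b_j$ lie in the interiors of opposite quadrants of $\mathbb{Z}^2$, and $0$ otherwise. *)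

theory Defs
  imports Complex_Main "HOL-Library.Poly_Mapping"
begin

text \<open>Polynomials in variables indexed by naturals (the variables d_0, ..., d_(n-1) are used),
  represented as finitely supported maps from exponent vectors to complex coefficients.\<close>
type_synonym cpoly = "(nat \<Rightarrow>\<^sub>0 nat) \<Rightarrow>\<^sub>0 complex"

definition dmono :: "(nat \<Rightarrow>\<^sub>0 nat) \<Rightarrow> cpoly" where
  "dmono u = Poly_Mapping.single u 1"

definition ideal_gen :: "cpoly set \<Rightarrow> cpoly set" where
  "ideal_gen G = {f. \<exists>S c. finite S \<and> S \<subseteq> G \<and> f = (\<Sum>g\<in>S. c g * g)}"

definition pos_part :: "nat \<Rightarrow> (nat \<Rightarrow> int) \<Rightarrow> (nat \<Rightarrow>\<^sub>0 nat)" where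
  "pos_part n u = Abs_poly_mapping (\<lambda>i. if i < n then nat (u i) else 0)"

definition neg_part :: "nat \<Rightarrow> (nat \<Rightarrow> int) \<Rightarrow> (nat \<Rightarrow>\<^sub>0 nat)" where
  "neg_part n u = Abs_poly_mapping (\<lambda>i. if i < n then nat (- u i) else 0)"

definition binom :: "nat \<Rightarrow> (nat \<Rightarrow> int) \<Rightarrow> cpoly" where
  "binom n u = dmono (pos_part n u) - dmono (neg_part n u)"

text \<open>Matrix B given by entries b i k, i < n (rows), k \<in> {0,1} (columns).
  Column k of B as a vector.\<close>
definition column :: "(nat \<Rightarrow> nat \<Rightarrow> int) \<Rightarrow> nat \<Rightarrow> (nat \<Rightarrow> int)" where
  "column b k = (\<lambda>i. b i k)"

definition lattice :: "(nat \<Rightarrow> nat \<Rightarrow> int) \<Rightarrow> (nat \<Rightarrow> int) set" where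
  "lattice b = {(\<lambda>i. p * b i 0 + q * b i 1) | p q. True}"

definition lattice_ideal :: "nat \<Rightarrow> (nat \<Rightarrow> nat \<Rightarrow> int) \<Rightarrow> cpoly set" where
  "lattice_ideal n b = ideal_gen {binom n u | u. u \<in> lattice b}"

definition lattice_basis_ideal :: "nat \<Rightarrow> (nat \<Rightarrow> nat \<Rightarrow> int) \<Rightarrow> cpoly set" where
  "lattice_basis_ideal n b = ideal_gen {binom n (column b 0), binom n (column b 1)}"

definition opposite_quadrants :: "(nat \<Rightarrow> nat \<Rightarrow> int) \<Rightarrow> nat \<Rightarrow> nat \<Rightarrow> bool" where
  "opposite_quadrants b i j \<longleftrightarrow>
     b i 0 \<noteq> 0 \<and> b i 1 \<noteq> 0 \<and> sgn (b j 0) = - sgn (b i 0) \<and> sgn (b j 1) = - sgn (b i 1)"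

definition nu :: "(nat \<Rightarrow> nat \<Rightarrow> int) \<Rightarrow> nat \<Rightarrow> nat \<Rightarrow> nat" where
  "nu b i j = (if opposite_quadrants b i j
               then nat (min \<bar>b i 0 * b j 1\<bar> \<bar>b j 0 * b i 1\<bar>) else 0)"

definition alpha :: "nat \<Rightarrow> (nat \<Rightarrow> nat \<Rightarrow> int) \<Rightarrow> (nat \<Rightarrow>\<^sub>0 nat)" where
  "alpha n b = Abs_poly_mapping
     (\<lambda>i. if i < n \<and> b i 0 > 0 then Max {nu b i j | j. j < n} else 0)"

end

theory Submission
  imports Defs
begin


definition ex :: "nat \<Rightarrow> (nat \<Rightarrow> int) \<Rightarrow> (nat \<Rightarrow>\<^sub>0 nat)" where
  "ex n g = Abs_poly_mapping (\<lambda>i. if i < n then nat (g i) else 0)"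

lemma lookup_ex: "Poly_Mapping.lookup (ex n g) = (\<lambda>i. if i < n then nat (g i) else 0)"
proof -
  have "finite {i. (if i < n then nat (g i) else 0) \<noteq> 0}"
    by (rule finite_subset[of _ "{..<n}"]) auto
  from lookup_Abs_poly_mapping[OF this] show ?thesis unfolding ex_def .
qed

lemma ex_cong: "(\<And>i. i < n \<Longrightarrow> g i = h i) \<Longrightarrow> ex n g = ex n h"
  by (rule poly_mapping_eqI) (simp add: lookup_ex)

lemma dmono_add: "dmono (u + v) = dmono u * dmono v"
  by (simp add: dmono_def mult_single)

lemma binom_ex: "binom n w = dmono (ex n w) - dmono (ex n (\<lambda>i. - w i))"
  unfolding binom_def pos_part_def neg_part_def ex_def by simp

lemma step_lemma:
  assumes "\<forall>i<n. 0 \<le> g i - max 0 (w i)"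
  shows "dmono (ex n g) - dmono (ex n (\<lambda>i. g i - w i))
       = dmono (ex n (\<lambda>i. g i - max 0 (w i))) * binom n w"
proof -
  have 1: "ex n g = ex n (\<lambda>i. g i - max 0 (w i)) + ex n w"
    by (rule poly_mapping_eqI) (use assms in \<open>auto simp: lookup_ex lookup_add\<close>)
  have 2: "ex n (\<lambda>i. g i - w i) = ex n (\<lambda>i. g i - max 0 (w i)) + ex n (\<lambda>i. - w i)"
    by (rule poly_mapping_eqI) (use assms in \<open>auto simp: lookup_ex lookup_add\<close>)
  show ?thesis unfolding 1 2 binom_ex dmono_add by (simp add: algebra_simps)
qed



lemma key_arith:
  fixes A C a c s t p q :: int
  assumes A: "A > 0" and C: "C < 0" and a: "a < 0" and c: "c > 0"
    and t: "0 \<le> t" and sp: "s + 1 \<le> p"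
    and h: "s * a + (t + 1) * c > max 0 (p * a + q * c)"
  shows "(s + 1) * A + t * C \<le> min (A * c) (a * C) + max 0 (p * A + q * C)"
proof -
  define X where "X = (s + 1) * A + t * C"
  define Y where "Y = (s + 1) * a + t * c"
  define D where "D = A * c - a * C"
  define Kj where "Kj = max 0 (p * a + q * c)"
  have h1: "s * a + (t + 1) * c \<ge> Kj + 1" using h unfolding Kj_def by linarith
  have "Y = s * a + (t + 1) * c + a - c" unfolding Y_def by (simp add: algebra_simps)
  with h1 have Y: "Y \<ge> Kj + 1 + a - c" by linarith
  have Kj: "Kj \<ge> 0" "p * a + q * c \<le> Kj" unfolding Kj_def by auto
  have id1: "(-a) * X + A * Y = D * t" unfolding X_def Y_def D_def by (simp add: algebra_simps)
  have id2: "c * X - C * Y = D * (s + 1)" unfolding X_def Y_def D_def by (simp add: algebra_simps)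
  have pa: "(-a - 1) * (c - 1) \<ge> 0" using a c by simp
  show ?thesis
  proof (cases "D \<le> 0")
    case True
    have "D * t \<le> 0" using True t by (simp add: mult_nonpos_nonneg)
    then have "(-a) * X \<le> - A * Y" using id1 by linarith
    also have "- A * Y \<le> - A * (Kj + 1 + a - c)" using Y A by simp
    also have "\<dots> \<le> A * (c - a - 1)" using Kj A by (simp add: algebra_simps)
    also have "\<dots> \<le> (-a) * (A * c)"
    proof -
      have "A * ((-a - 1) * (c - 1)) \<ge> 0" using A pa by simp
      then show ?thesis by (simp add: algebra_simps)
    qed
    finally have "(-a) * X \<le> (-a) * (A * c)" .
    then have "X \<le> A * c" using a by simp
    moreover have "min (A * c) (a * C) = A * c" using True unfolding D_def by simp
    ultimately show ?thesis unfolding X_def by simp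
  next
    case False
    have "D * (s + 1) \<le> D * p" using False sp by (simp add: mult_left_mono)
    have Dp: "D * p = c * (p * A + q * C) - C * (p * a + q * c)" unfolding D_def by (simp add: algebra_simps)
    have "c * X = D * (s + 1) + C * Y" using id2 by simp
    also have "\<dots> \<le> D * p + C * Y" using \<open>D * (s + 1) \<le> D * p\<close> by simp
    also have "\<dots> = c * (p * A + q * C) + C * (Y - (p * a + q * c))" using Dp by (simp add: algebra_simps)
    also have "\<dots> \<le> c * (p * A + q * C) + C * (1 + a - c)"
    proof -
      have "Y - (p * a + q * c) \<ge> 1 + a - c" using Y Kj by simp
      then have "C * (Y - (p * a + q * c)) \<le> C * (1 + a - c)" using C by (simp add: mult_left_mono_neg)
      then show ?thesis by simp
    qed
    also have "\<dots> \<le> c * (p * A + q * C) + c * (a * C)"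
    proof -
      have "(-C) * ((-a - 1) * (c - 1)) \<ge> 0" using mult_nonneg_nonneg[OF _ pa, of "-C"] C by linarith
      then show ?thesis by (simp add: algebra_simps)
    qed
    finally have "c * X \<le> c * ((p * A + q * C) + a * C)" by (simp add: algebra_simps)
    then have "X \<le> (p * A + q * C) + a * C" using c by simp
    moreover have "min (A * c) (a * C) = a * C" using False unfolding D_def by simp
    ultimately show ?thesis unfolding X_def by simp
  qed
qed



definition adj :: "(int \<times> int) set \<Rightarrow> int \<times> int \<Rightarrow> int \<times> int \<Rightarrow> bool" where
  "adj F x y \<longleftrightarrow> x \<in> F \<and> y \<in> F \<and>
     ((fst y = fst x + 1 \<or> fst y = fst x - 1) \<and> snd y = snd x \<or>
      fst y = fst x \<and> (snd y = snd x + 1 \<or> snd y = snd x - 1))"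

definition Fset :: "nat \<Rightarrow> (nat \<Rightarrow> int) \<Rightarrow> (nat \<Rightarrow> int) \<Rightarrow> (nat \<Rightarrow> int) \<Rightarrow> int \<Rightarrow> int \<Rightarrow> (int \<times> int) set" where
  "Fset n a c \<beta> p q = {x. \<forall>i<n. fst x * a i + snd x * c i \<le> \<beta> i + max 0 (p * a i + q * c i)}"

lemma core:
  fixes a c \<beta> :: "nat \<Rightarrow> int" and p q :: int
  assumes p: "0 \<le> p" and q: "0 \<le> q"
   and budget: "\<And>i j. i < n \<Longrightarrow> j < n \<Longrightarrow> a i > 0 \<Longrightarrow> c i < 0 \<Longrightarrow> a j < 0 \<Longrightarrow> c j > 0
        \<Longrightarrow> min (a i * c j) (a j * c i) \<le> \<beta> i"
   and beta: "\<And>i. i < n \<Longrightarrow> 0 \<le> \<beta> i"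
  shows "(adj (Fset n a c \<beta> p q))\<^sup>*\<^sup>* (0,0) (p,q)"
proof -
  define F where "F = Fset n a c \<beta> p q"
  define Cf where "Cf = (\<lambda>s t. \<forall>j<n. a j < 0 \<longrightarrow> c j > 0 \<longrightarrow> s * a j + t * c j \<le> max 0 (p * a j + q * c j))"
  have main: "\<And>s t. nat ((p - s) + (q - t)) = m \<Longrightarrow> 0 \<le> s \<Longrightarrow> s \<le> p \<Longrightarrow> 0 \<le> t \<Longrightarrow> t \<le> q
     \<Longrightarrow> (s, t) \<in> F \<Longrightarrow> Cf s t \<Longrightarrow> (adj F)\<^sup>*\<^sup>* (s, t) (p, q)" for m
  proof (induct m rule: less_induct)
    case (less m s t)
    show ?case
    proof (cases "(s, t) = (p, q)")
      case True then show ?thesis by simp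
    next
      case neq: False
      show ?thesis
      proof (cases "t < q \<and> Cf s (t + 1)")
        case True
        have inF: "(s, t + 1) \<in> F" unfolding F_def Fset_def
        proof (intro CollectI allI impI)
          fix i assume i: "i < n"
          have old: "s * a i + t * c i \<le> \<beta> i + max 0 (p * a i + q * c i)"
            using less.prems(6) i unfolding F_def Fset_def by auto
          show "fst (s, t + 1) * a i + snd (s, t + 1) * c i \<le> \<beta> i + max 0 (p * a i + q * c i)"
          proof (cases "c i \<le> 0")
            case True then show ?thesis using old by (simp add: algebra_simps)
          next
            case False
            show ?thesis
            proof (cases "a i < 0")
              case True
              then have "s * a i + (t + 1) * c i \<le> max 0 (p * a i + q * c i)"
                using \<open>t < q \<and> Cf s (t + 1)\<close> False i unfolding Cf_def by auto
              then show ?thesis using beta[OF i] by simp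
            next
              case False2: False
              have "s * a i \<le> p * a i" using False2 less.prems(3) by (simp add: mult_right_mono)
              moreover have "(t + 1) * c i \<le> q * c i" using False True by (simp add: mult_right_mono)
              ultimately show ?thesis using beta[OF i] by simp
            qed
          qed
        qed
        have "adj F (s, t) (s, t + 1)" unfolding adj_def using inF less.prems(6) by simp
        moreover have "(adj F)\<^sup>*\<^sup>* (s, t + 1) (p, q)"
          using less.hyps[of "nat ((p - s) + (q - (t + 1)))" s "t + 1"] less.prems True inF
          by auto
        ultimately show ?thesis by (rule converse_rtranclp_into_rtranclp)
      next
        case False
        have sp: "s < p"
        proof (rule ccontr)
          assume "\<not> s < p"
          then have sp: "s = p" using less.prems(3) by simp
          then have tq: "t < q" using neq less.prems(5) by auto
          have "Cf s (t + 1)" unfolding Cf_def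
          proof (intro allI impI)
            fix j assume "j < n" "a j < 0" "c j > 0"
            have "(t + 1) * c j \<le> q * c j" using tq \<open>c j > 0\<close> by (simp add: mult_right_mono)
            then show "s * a j + (t + 1) * c j \<le> max 0 (p * a j + q * c j)" using sp by simp
          qed
          then show False using False tq by simp
        qed
        have Cf1: "Cf (s + 1) t" using less.prems(7) unfolding Cf_def
          by (auto simp: algebra_simps)
        have inF: "(s + 1, t) \<in> F" unfolding F_def Fset_def
        proof (intro CollectI allI impI)
          fix i assume i: "i < n"
          have old: "s * a i + t * c i \<le> \<beta> i + max 0 (p * a i + q * c i)"
            using less.prems(6) i unfolding F_def Fset_def by auto
          show "fst (s + 1, t) * a i + snd (s + 1, t) * c i \<le> \<beta> i + max 0 (p * a i + q * c i)"
          proof (cases "a i \<le> 0")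
            case True then show ?thesis using old by (simp add: algebra_simps)
          next
            case ai: False
            show ?thesis
            proof (cases "c i \<ge> 0")
              case True
              have "(s + 1) * a i \<le> p * a i" using ai sp by (simp add: mult_right_mono)
              moreover have "t * c i \<le> q * c i" using True less.prems(5) by (simp add: mult_right_mono)
              ultimately show ?thesis using beta[OF i] by simp
            next
              case ci: False
              show ?thesis
              proof (cases "t = q")
                case True
                have "(s + 1) * a i \<le> p * a i" using ai sp by (simp add: mult_right_mono)
                then show ?thesis using True beta[OF i] by simp
              next
                case tq: False
                then have "t < q" using less.prems(5) by simp
                then have "\<not> Cf s (t + 1)" using False by simp
                then obtain j where j: "j < n" "a j < 0" "c j > 0"
                  "s * a j + (t + 1) * c j > max 0 (p * a j + q * c j)"
                  unfolding Cf_def using not_le by blast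
                have "(s + 1) * a i + t * c i \<le> min (a i * c j) (a j * c i) + max 0 (p * a i + q * c i)"
                  by (rule key_arith) (use ai ci j less.prems sp in auto)
                then show ?thesis using budget[OF i j(1) _ _ j(2) j(3)] ai ci by simp
              qed
            qed
          qed
        qed
        have "adj F (s, t) (s + 1, t)" unfolding adj_def using inF less.prems(6) by simp
        moreover have "(adj F)\<^sup>*\<^sup>* (s + 1, t) (p, q)"
          using less.hyps[of "nat ((p - (s + 1)) + (q - t))" "s + 1" t] less.prems sp inF Cf1
          by auto
        ultimately show ?thesis by (rule converse_rtranclp_into_rtranclp)
      qed
    qed
  qed
  have "(0, 0) \<in> F" unfolding F_def Fset_def using beta by auto
  moreover have "Cf 0 0" unfolding Cf_def by auto
  ultimately show ?thesis using main[OF refl, of 0 0] p q unfolding F_def by auto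
qed



lemma rtranclp_map:
  assumes "\<And>x y. R x y \<Longrightarrow> S (g x) (g y)" and "R\<^sup>*\<^sup>* x y"
  shows "S\<^sup>*\<^sup>* (g x) (g y)"
  using assms(2)
proof (induct rule: rtranclp_induct)
  case base then show ?case by simp
next
  case (step y z)
  show ?case by (rule rtranclp.rtrancl_into_rtrancl[OF step(3) assms(1)[OF step(2)]])
qed

lemma rtranclp_sym:
  assumes "\<And>x y. R x y \<Longrightarrow> R y x" and "R\<^sup>*\<^sup>* x y"
  shows "R\<^sup>*\<^sup>* y x"
  using assms(2)
proof (induct rule: rtranclp_induct)
  case base then show ?case by simp
next
  case (step y z)
  show ?case by (rule converse_rtranclp_into_rtranclp[OF assms(1)[OF step(2)] step(3)])
qed

lemma adj_sym: "adj F x y \<Longrightarrow> adj F y x"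
  unfolding adj_def by auto

lemma flip_in:
  assumes "x \<in> Fset n a (\<lambda>i. - c i) \<beta> p (- q)"
  shows "(fst x, - snd x) \<in> Fset n a c \<beta> p q"
  unfolding Fset_def
proof (intro CollectI allI impI)
  fix i assume i: "i < n"
  have h: "fst x * a i + snd x * (- c i) \<le> \<beta> i + max 0 (p * a i + (- q) * (- c i))"
    using assms i unfolding Fset_def by auto
  then show "fst (fst x, - snd x) * a i + snd (fst x, - snd x) * c i \<le> \<beta> i + max 0 (p * a i + q * c i)"
    by simp
qed

lemma half:
  fixes a c \<beta> :: "nat \<Rightarrow> int" and p q :: int
  assumes p: "0 \<le> p"
   and budget1: "\<And>i j. i < n \<Longrightarrow> j < n \<Longrightarrow> a i > 0 \<Longrightarrow> c i < 0 \<Longrightarrow> a j < 0 \<Longrightarrow> c j > 0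
        \<Longrightarrow> min (a i * c j) (a j * c i) \<le> \<beta> i"
   and budget2: "\<And>i j. i < n \<Longrightarrow> j < n \<Longrightarrow> a i > 0 \<Longrightarrow> c i > 0 \<Longrightarrow> a j < 0 \<Longrightarrow> c j < 0
        \<Longrightarrow> min (a i * (- c j)) (a j * (- c i)) \<le> \<beta> i"
   and beta: "\<And>i. i < n \<Longrightarrow> 0 \<le> \<beta> i"
  shows "(adj (Fset n a c \<beta> p q))\<^sup>*\<^sup>* (0,0) (p,q)"
proof (cases "0 \<le> q")
  case True
  show ?thesis by (rule core[OF p True budget1 beta])
next
  case False
  have "(adj (Fset n a (\<lambda>i. - c i) \<beta> p (- q)))\<^sup>*\<^sup>* (0,0) (p, - q)"
  proof (rule core)
    show "0 \<le> - q" using False by simp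
    show "0 \<le> p" by (rule p)
    show "0 \<le> \<beta> i" if "i < n" for i using beta that .
    show "min (a i * (- c j)) (a j * (- (c i))) \<le> \<beta> i"
      if "i < n" "j < n" "a i > 0" "- c i < 0" "a j < 0" "- c j > 0" for i j
      using budget2[of i j] that by simp
  qed
  then have "(adj (Fset n a c \<beta> p q))\<^sup>*\<^sup>* ((\<lambda>x. (fst x, - snd x)) (0,0)) ((\<lambda>x. (fst x, - snd x)) (p, - q))"
  proof (rule rtranclp_map[rotated])
    fix x y assume "adj (Fset n a (\<lambda>i. - c i) \<beta> p (- q)) x y"
    then show "adj (Fset n a c \<beta> p q) (fst x, - snd x) (fst y, - snd y)"
      using flip_in[of x n a c \<beta> p q] flip_in[of y n a c \<beta> p q] unfolding adj_def by auto
  qed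
  then show ?thesis by simp
qed

lemma shift_in:
  assumes "x \<in> Fset n a c \<beta> (- p) (- q)"
  shows "(fst x + p, snd x + q) \<in> Fset n a c \<beta> p q"
  unfolding Fset_def
proof (intro CollectI allI impI)
  fix i assume i: "i < n"
  have h: "fst x * a i + snd x * c i \<le> \<beta> i + max 0 ((- p) * a i + (- q) * c i)"
    using assms i unfolding Fset_def by auto
  have e1: "(- p) * a i + (- q) * c i = - (p * a i + q * c i)" by (simp add: algebra_simps)
  have e2: "fst (fst x + p, snd x + q) * a i + snd (fst x + p, snd x + q) * c i
     = (fst x * a i + snd x * c i) + (p * a i + q * c i)" by (simp add: algebra_simps)
  show "fst (fst x + p, snd x + q) * a i + snd (fst x + p, snd x + q) * c i \<le> \<beta> i + max 0 (p * a i + q * c i)"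
    unfolding e2 using h unfolding e1 by linarith
qed

lemma all_P:
  fixes a c \<beta> :: "nat \<Rightarrow> int" and p q :: int
  assumes budget1: "\<And>i j. i < n \<Longrightarrow> j < n \<Longrightarrow> a i > 0 \<Longrightarrow> c i < 0 \<Longrightarrow> a j < 0 \<Longrightarrow> c j > 0
        \<Longrightarrow> min (a i * c j) (a j * c i) \<le> \<beta> i"
   and budget2: "\<And>i j. i < n \<Longrightarrow> j < n \<Longrightarrow> a i > 0 \<Longrightarrow> c i > 0 \<Longrightarrow> a j < 0 \<Longrightarrow> c j < 0
        \<Longrightarrow> min (a i * (- c j)) (a j * (- c i)) \<le> \<beta> i"
   and beta: "\<And>i. i < n \<Longrightarrow> 0 \<le> \<beta> i"
  shows "(adj (Fset n a c \<beta> p q))\<^sup>*\<^sup>* (0,0) (p,q)"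
proof (cases "0 \<le> p")
  case True
  show ?thesis by (rule half[OF True budget1 budget2 beta])
next
  case False
  have "(adj (Fset n a c \<beta> (- p) (- q)))\<^sup>*\<^sup>* (0,0) (- p, - q)"
  proof (rule half)
    show "0 \<le> - p" using False by simp
  qed (fact budget1 budget2 beta)+
  then have "(adj (Fset n a c \<beta> p q))\<^sup>*\<^sup>* ((\<lambda>x. (fst x + p, snd x + q)) (0,0)) ((\<lambda>x. (fst x + p, snd x + q)) (- p, - q))"
  proof (rule rtranclp_map[rotated])
    fix x y assume "adj (Fset n a c \<beta> (- p) (- q)) x y"
    then show "adj (Fset n a c \<beta> p q) (fst x + p, snd x + q) (fst y + p, snd y + q)"
      using shift_in[of x n a c \<beta> p q] shift_in[of y n a c \<beta> p q] unfolding adj_def by auto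
  qed
  then have "(adj (Fset n a c \<beta> p q))\<^sup>*\<^sup>* (p, q) (0, 0)" by simp
  then show ?thesis using rtranclp_sym[of "adj (Fset n a c \<beta> p q)"] adj_sym by metis
qed



definition inJ :: "nat \<Rightarrow> (nat \<Rightarrow> nat \<Rightarrow> int) \<Rightarrow> cpoly \<Rightarrow> bool" where
  "inJ n b f \<longleftrightarrow> (\<exists>h1 h2. f = h1 * binom n (column b 0) + h2 * binom n (column b 1))"

lemma inJ_add: "inJ n b f \<Longrightarrow> inJ n b g \<Longrightarrow> inJ n b (f + g)"
  unfolding inJ_def
proof (elim exE)
  fix h1 h2 k1 k2
  assume "f = h1 * binom n (column b 0) + h2 * binom n (column b 1)"
    "g = k1 * binom n (column b 0) + k2 * binom n (column b 1)"
  then have "f + g = (h1 + k1) * binom n (column b 0) + (h2 + k2) * binom n (column b 1)"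
    by (simp add: algebra_simps)
  then show "\<exists>h1 h2. f + g = h1 * binom n (column b 0) + h2 * binom n (column b 1)" by blast
qed

lemma inJ_mult: "inJ n b f \<Longrightarrow> inJ n b (r * f)"
  unfolding inJ_def
proof (elim exE)
  fix h1 h2
  assume "f = h1 * binom n (column b 0) + h2 * binom n (column b 1)"
  then have "r * f = (r * h1) * binom n (column b 0) + (r * h2) * binom n (column b 1)"
    by (simp add: algebra_simps)
  then show "\<exists>h1 h2. r * f = h1 * binom n (column b 0) + h2 * binom n (column b 1)" by blast
qed

lemma inJ_zero: "inJ n b 0"
  unfolding inJ_def by (rule exI[of _ 0], rule exI[of _ 0]) simp

lemma inJ_gen0: "inJ n b (r * binom n (column b 0))"
  unfolding inJ_def by (rule exI[of _ r], rule exI[of _ 0]) simp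

lemma inJ_gen1: "inJ n b (r * binom n (column b 1))"
  unfolding inJ_def by (rule exI[of _ 0], rule exI[of _ r]) simp

lemma inJ_sum: "finite S \<Longrightarrow> (\<And>g. g \<in> S \<Longrightarrow> inJ n b (F g)) \<Longrightarrow> inJ n b (\<Sum>g\<in>S. F g)"
  by (induct S rule: finite_induct) (auto intro: inJ_add inJ_zero)

lemma inJ_ideal:
  assumes "inJ n b f" shows "f \<in> lattice_basis_ideal n b"
proof -
  obtain h1 h2 where f: "f = h1 * binom n (column b 0) + h2 * binom n (column b 1)"
    using assms unfolding inJ_def by blast
  show ?thesis
  proof (cases "binom n (column b 0) = binom n (column b 1)")
    case True
    show ?thesis unfolding lattice_basis_ideal_def ideal_gen_def
      by (rule CollectI, rule exI[of _ "{binom n (column b 0)}"], rule exI[of _ "\<lambda>_. h1 + h2"])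
        (simp add: f True algebra_simps)
  next
    case False
    show ?thesis unfolding lattice_basis_ideal_def ideal_gen_def
      by (rule CollectI, rule exI[of _ "{binom n (column b 0), binom n (column b 1)}"],
          rule exI[of _ "\<lambda>g. if g = binom n (column b 0) then h1 else h2"])
        (use False in \<open>simp add: f\<close>)
  qed
qed

lemma step_inJ:
  assumes w: "w = column b 0 \<or> w = column b 1"
    and g: "\<forall>i<n. 0 \<le> g i \<and> 0 \<le> g i - w i"
  shows "inJ n b (dmono (ex n g) - dmono (ex n (\<lambda>i. g i - w i)))"
    and "inJ n b (dmono (ex n (\<lambda>i. g i - w i)) - dmono (ex n g))"
proof -
  have g': "\<forall>i<n. 0 \<le> g i - max 0 (w i)" using g by auto
  have e: "dmono (ex n g) - dmono (ex n (\<lambda>i. g i - w i))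
       = dmono (ex n (\<lambda>i. g i - max 0 (w i))) * binom n w" by (rule step_lemma[OF g'])
  have 1: "inJ n b (r * binom n w)" for r using w inJ_gen0 inJ_gen1 by metis
  show "inJ n b (dmono (ex n g) - dmono (ex n (\<lambda>i. g i - w i)))" unfolding e by (rule 1)
  have "dmono (ex n (\<lambda>i. g i - w i)) - dmono (ex n g)
      = (- dmono (ex n (\<lambda>i. g i - max 0 (w i)))) * binom n w" using e by (simp add: algebra_simps)
  then show "inJ n b (dmono (ex n (\<lambda>i. g i - w i)) - dmono (ex n g))"
    using 1[of "- dmono (ex n (\<lambda>i. g i - max 0 (w i)))"] by simp
qed

lemma conn:
  fixes K :: "nat \<Rightarrow> int" and n :: nat and b :: "nat \<Rightarrow> nat \<Rightarrow> int"
  defines "E \<equiv> \<lambda>x. ex n (\<lambda>i. K i - (fst x * b i 0 + snd x * b i 1))"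
  assumes F: "\<And>x i. x \<in> F \<Longrightarrow> i < n \<Longrightarrow> fst x * b i 0 + snd x * b i 1 \<le> K i"
    and r: "(adj F)\<^sup>*\<^sup>* x y"
  shows "inJ n b (dmono (E x) - dmono (E y))"
  using r
proof (induct rule: rtranclp_induct)
  case base then show ?case using inJ_zero by simp
next
  case (step y z)
  have yz: "inJ n b (dmono (E y) - dmono (E z))"
  proof -
    have yF: "y \<in> F" and zF: "z \<in> F" using step(2) unfolding adj_def by auto
    define gy where "gy = (\<lambda>i. K i - (fst y * b i 0 + snd y * b i 1))"
    define gz where "gz = (\<lambda>i. K i - (fst z * b i 0 + snd z * b i 1))"
    have Ey: "E y = ex n gy" and Ez: "E z = ex n gz" unfolding E_def gy_def gz_def by auto
    have gy0: "\<forall>i<n. 0 \<le> gy i" using F[OF yF] unfolding gy_def by auto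
    have gz0: "\<forall>i<n. 0 \<le> gz i" using F[OF zF] unfolding gz_def by auto
    have c0: "column b 0 = (\<lambda>i. b i 0)" and c1: "column b 1 = (\<lambda>i. b i 1)"
      unfolding column_def by auto
    consider "fst z = fst y + 1" "snd z = snd y" | "fst z = fst y - 1" "snd z = snd y"
      | "fst z = fst y" "snd z = snd y + 1" | "fst z = fst y" "snd z = snd y - 1"
      using step(2) unfolding adj_def by auto
    then show ?thesis
    proof cases
      case 1
      have "gz = (\<lambda>i. gy i - column b 0 i)" unfolding gz_def gy_def c0 using 1 by (auto simp: algebra_simps)
      then show ?thesis unfolding Ey Ez using step_inJ(1)[of "column b 0" b n gy] gy0 gz0 by auto
    next
      case 2
      have "fst y = fst z + 1" "snd y = snd z" using 2 by auto
      then have "gy = (\<lambda>i. gz i - column b 0 i)" unfolding gz_def gy_def c0 by (auto simp: algebra_simps)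
      then show ?thesis unfolding Ey Ez using step_inJ(2)[of "column b 0" b n gz] gy0 gz0 by auto
    next
      case 3
      have "gz = (\<lambda>i. gy i - column b 1 i)" unfolding gz_def gy_def c1 using 3 by (auto simp: algebra_simps)
      then show ?thesis unfolding Ey Ez using step_inJ(1)[of "column b 1" b n gy] gy0 gz0 by auto
    next
      case 4
      have "fst y = fst z" "snd y = snd z + 1" using 4 by auto
      then have "gy = (\<lambda>i. gz i - column b 1 i)" unfolding gz_def gy_def c1 by (auto simp: algebra_simps)
      then show ?thesis unfolding Ey Ez using step_inJ(2)[of "column b 1" b n gz] gy0 gz0 by auto
    qed
  qed
  have "dmono (E x) - dmono (E z) = (dmono (E x) - dmono (E y)) + (dmono (E y) - dmono (E z))" by simp
  then show ?case using inJ_add[OF step(3) yz] by simp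
qed



lemma pos_part_ex: "pos_part n u = ex n u"
  unfolding pos_part_def ex_def by simp

lemma neg_part_ex: "neg_part n u = ex n (\<lambda>i. - u i)"
  unfolding neg_part_def ex_def by simp

lemma lookup_alpha: "Poly_Mapping.lookup (alpha n b) i =
   (if i < n \<and> b i 0 > 0 then Max {nu b i j | j. j < n} else 0)"
proof -
  have "finite {i. (if i < n \<and> b i 0 > 0 then Max {nu b i j | j. j < n} else 0) \<noteq> 0}"
    by (rule finite_subset[of _ "{..<n}"]) auto
  from lookup_Abs_poly_mapping[OF this] show ?thesis unfolding alpha_def by simp
qed

lemma nu_le_alpha:
  assumes "i < n" "j < n" "b i 0 > 0"
  shows "nu b i j \<le> Poly_Mapping.lookup (alpha n b) i"
proof -
  have fin: "finite {nu b i j | j. j < n}"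
  proof -
    have "{nu b i j | j. j < n} = (\<lambda>j. nu b i j) ` {..<n}" by auto
    then show ?thesis by simp
  qed
  have "nu b i j \<le> Max {nu b i j | j. j < n}" by (rule Max_ge[OF fin]) (use assms in auto)
  then show ?thesis using assms by (simp add: lookup_alpha)
qed

theorem proposition4p4:
  fixes n :: nat and b :: "nat \<Rightarrow> nat \<Rightarrow> int"
  assumes rank2: "\<exists>i j. i < n \<and> j < n \<and> b i 0 * b j 1 - b j 0 * b i 1 \<noteq> 0"
    and rows_sum_zero: "\<forall>k < 2. (\<Sum>i<n. b i k) = 0"
  shows "\<forall>f \<in> lattice_ideal n b. dmono (alpha n b) * f \<in> lattice_basis_ideal n b"
proof
  define \<beta> where "\<beta> = (\<lambda>i. int (Poly_Mapping.lookup (alpha n b) i))"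
  define a where "a = (\<lambda>i. b i 0)"
  define c where "c = (\<lambda>i. b i 1)"
  have beta: "\<And>i. i < n \<Longrightarrow> 0 \<le> \<beta> i" unfolding \<beta>_def by simp
  have budget1: "min (a i * c j) (a j * c i) \<le> \<beta> i"
    if "i < n" "j < n" "a i > 0" "c i < 0" "a j < 0" "c j > 0" for i j
  proof -
    have oq: "opposite_quadrants b i j" using that unfolding opposite_quadrants_def a_def c_def by auto
    have p1: "a i * c j > 0" using that by (simp add: mult_pos_pos)
    have p2: "a j * c i > 0" using that by (simp add: mult_neg_neg)
    have "int (nu b i j) = min (a i * c j) (a j * c i)"
      unfolding nu_def using oq p1 p2 unfolding a_def c_def by simp
    moreover have "nu b i j \<le> Poly_Mapping.lookup (alpha n b) i"
      using nu_le_alpha that unfolding a_def by auto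
    ultimately show ?thesis unfolding \<beta>_def by linarith
  qed
  have budget2: "min (a i * (- c j)) (a j * (- c i)) \<le> \<beta> i"
    if "i < n" "j < n" "a i > 0" "c i > 0" "a j < 0" "c j < 0" for i j
  proof -
    have oq: "opposite_quadrants b i j" using that unfolding opposite_quadrants_def a_def c_def by auto
    have p1: "a i * (- c j) > 0" using that by (intro mult_pos_pos) auto
    have p2: "a j * (- c i) > 0" using that by (intro mult_neg_neg) auto
    have e1: "\<bar>b i 0 * b j 1\<bar> = a i * (- c j)" using p1 unfolding a_def c_def by simp
    have e2: "\<bar>b j 0 * b i 1\<bar> = a j * (- c i)" using p2 unfolding a_def c_def by simp
    have "int (nu b i j) = min (a i * (- c j)) (a j * (- c i))"
      unfolding nu_def using oq p1 p2 e1 e2 by simp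
    moreover have "nu b i j \<le> Poly_Mapping.lookup (alpha n b) i"
      using nu_le_alpha that unfolding a_def by auto
    ultimately show ?thesis unfolding \<beta>_def by linarith
  qed
  have key: "inJ n b (dmono (alpha n b) * binom n u)" if u: "u \<in> lattice b" for u
  proof -
    obtain p q where u: "u = (\<lambda>i. p * b i 0 + q * b i 1)" using u unfolding lattice_def by blast
    define K where "K = (\<lambda>i. \<beta> i + max 0 (p * a i + q * c i))"
    define E where "E = (\<lambda>x. ex n (\<lambda>i. K i - (fst x * b i 0 + snd x * b i 1)))"
    have path: "(adj (Fset n a c \<beta> p q))\<^sup>*\<^sup>* (0,0) (p,q)"
      by (rule all_P[OF budget1 budget2 beta])
    have inJ: "inJ n b (dmono (E (0,0)) - dmono (E (p,q)))"
      unfolding E_def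
    proof (rule conn[OF _ path])
      fix x i assume "x \<in> Fset n a c \<beta> p q" "i < n"
      then show "fst x * b i 0 + snd x * b i 1 \<le> K i" unfolding Fset_def K_def a_def c_def by auto
    qed
    have lk: "Poly_Mapping.lookup (alpha n b) i = 0" if "\<not> i < n" for i
      using that by (simp add: lookup_alpha)
    have E0: "E (0,0) = alpha n b + pos_part n u"
    proof (rule poly_mapping_eqI)
      fix i
      show "Poly_Mapping.lookup (E (0, 0)) i = Poly_Mapping.lookup (alpha n b + pos_part n u) i"
        unfolding E_def lookup_add pos_part_ex lookup_ex K_def \<beta>_def a_def c_def u
        using lk[of i] by auto
    qed
    have E1: "E (p,q) = alpha n b + neg_part n u"
    proof (rule poly_mapping_eqI)
      fix i
      have ng: "neg_part n u = ex n (\<lambda>i. - u i)" unfolding neg_part_def ex_def by simp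
      show "Poly_Mapping.lookup (E (p, q)) i = Poly_Mapping.lookup (alpha n b + neg_part n u) i"
        unfolding E_def lookup_add neg_part_ex lookup_ex K_def \<beta>_def a_def c_def u
        using lk[of i] by auto
    qed
    have "dmono (alpha n b) * binom n u = dmono (E (0,0)) - dmono (E (p,q))"
      unfolding E0 E1 binom_def dmono_add by (simp add: algebra_simps)
    then show ?thesis using inJ by simp
  qed
  fix f assume "f \<in> lattice_ideal n b"
  then obtain S cf where S: "finite S" "S \<subseteq> {binom n u | u. u \<in> lattice b}" and f: "f = (\<Sum>g\<in>S. cf g * g)"
    unfolding lattice_ideal_def ideal_gen_def by blast
  have "dmono (alpha n b) * f = (\<Sum>g\<in>S. cf g * (dmono (alpha n b) * g))"
    unfolding f sum_distrib_left by (simp add: algebra_simps)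
  moreover have "inJ n b (\<Sum>g\<in>S. cf g * (dmono (alpha n b) * g))"
  proof (rule inJ_sum[OF S(1)])
    fix g assume "g \<in> S"
    then obtain u where "u \<in> lattice b" "g = binom n u" using S(2) by blast
    then show "inJ n b (cf g * (dmono (alpha n b) * g))" using key inJ_mult by blast
  qed
  ultimately show "dmono (alpha n b) * f \<in> lattice_basis_ideal n b" using inJ_ideal by simp
qed

end
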